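(* Let $(S,E)$ and $(S',E')$ be finite simple graphs and let $N(S,E)$, $N(S',E')$ be the simply connected real Lie groups whose Lie algebras are $\mathfrak{n}(S,E)$ and $\mathfrak{n}(S',E')$ (over $k=\mathbb{R}$). Then $N(S,E)$ and $N(S',E')$ are isomorphic as Lie groups if and only if the graphs $(S,E)$ and $(S',E')$ are isomorphic.
   Context: A finite simple graph $(S,E)$ has finite vertex set $S$ and edge set $E$ consisting of unordered pairs $\alpha\beta$ of distinct vertices. Let $V$ be the real vector space with basis $S$, and let $W\subseteq \bigwedge^2 V$ be the subspace spanned by all $\alpha\wedge\beta$ with $\alpha,\beta\in S$, $\alpha\neq\beta$ and $\alpha\beta\notin E$. The real Lie algebra $\mathfrak{n}(S,E)$ is $V\oplus (\bigwedge^2V)/W$ with bracket determined by $[v_1,v_2]=v_1\wedge v_2 \bmod W$ for $v_1,v_2\in V$ and $[x,y]=0$ for $x\in\mathfrak{n}(S,E)$, $y\in(\bigwedge^2V)/W$. Concretely, $N(S,E)$ can be realized as the set $\mathfrak{n}(S,E)$ with multiplication $(v_1,x_1)\cdot(v_2,x_2)=(v_1+v_2,\,x_1+x_2+\tfrac12[v_1,v_2])$ for $v_i\in V$, $x_i\in(\bigwedge^2V)/W$. *)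

theory Defs
  imports "HOL-Analysis.Analysis"
begin

definition simple_graph :: "'a set \<Rightarrow> 'a set set \<Rightarrow> bool" where
  "simple_graph S E \<longleftrightarrow> finite S \<and>
     (\<forall>e\<in>E. \<exists>a b. e = {a, b} \<and> a \<noteq> b \<and> a \<in> S \<and> b \<in> S)"

definition graph_iso :: "'a set \<Rightarrow> 'a set set \<Rightarrow> 'b set \<Rightarrow> 'b set set \<Rightarrow> bool" where
  "graph_iso S E S' E' \<longleftrightarrow> (\<exists>f. bij_betw f S S' \<and>
     (\<forall>a\<in>S. \<forall>b\<in>S. {a, b} \<in> E \<longleftrightarrow> {f a, f b} \<in> E'))"

fun Ck :: "nat \<Rightarrow> ('x::real_normed_vector \<Rightarrow> 'y::real_normed_vector) \<Rightarrow> bool" where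
  "Ck 0 f = continuous_on UNIV f"
| "Ck (Suc k) f = (\<exists>f'. (\<forall>x. (f has_derivative f' x) (at x)) \<and> (\<forall>v. Ck k (\<lambda>x. f' x v)))"

definition smooth :: "('x::real_normed_vector \<Rightarrow> 'y::real_normed_vector) \<Rightarrow> bool" where
  "smooth f \<longleftrightarrow> (\<forall>k. Ck k f)"

text \<open>V = functions on S (vectors in real^'a vanishing off S). The quotient
  (wedge^2 V)/W is identified with its coordinates w.r.t. the basis a\<and>b (ab an edge):
  antisymmetric matrices supported on edges. The element v1\<and>v2 mod W has coordinate
  v1(a) v2(b) - v1(b) v2(a) at the edge ab.\<close>

type_synonym 'a Nelem = "(real^'a) \<times> (real^'a^'a)"

definition N_carrier :: "'a::finite set \<Rightarrow> 'a set set \<Rightarrow> 'a Nelem set" where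
  "N_carrier S E = {(v, c). (\<forall>x. x \<notin> S \<longrightarrow> v $ x = 0) \<and>
      (\<forall>i j. c $ i $ j = - (c $ j $ i)) \<and> (\<forall>i j. {i, j} \<notin> E \<longrightarrow> c $ i $ j = 0)}"

definition N_bracket :: "'a::finite set set \<Rightarrow> real^'a \<Rightarrow> real^'a \<Rightarrow> real^'a^'a" where
  "N_bracket E v1 v2 = (\<chi> i j. if {i, j} \<in> E then v1 $ i * v2 $ j - v1 $ j * v2 $ i else 0)"

definition N_mult :: "'a::finite set set \<Rightarrow> 'a Nelem \<Rightarrow> 'a Nelem \<Rightarrow> 'a Nelem" where
  "N_mult E x y = (fst x + fst y, snd x + snd y + (1/2) *\<^sub>R N_bracket E (fst x) (fst y))"

text \<open>Lie group isomorphism: a bijective group homomorphism which is a diffeomorphism,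
  i.e. it and its inverse are smooth (restrictions of smooth maps of the ambient
  vector spaces; the carriers are linear subspaces, so this is the usual smoothness).\<close>

definition N_lie_iso :: "'a::finite set \<Rightarrow> 'a set set \<Rightarrow> 'b::finite set \<Rightarrow> 'b set set
     \<Rightarrow> ('a Nelem \<Rightarrow> 'b Nelem) \<Rightarrow> bool" where
  "N_lie_iso S E S' E' \<phi> \<longleftrightarrow>
     bij_betw \<phi> (N_carrier S E) (N_carrier S' E') \<and>
     (\<forall>x\<in>N_carrier S E. \<forall>y\<in>N_carrier S E. \<phi> (N_mult E x y) = N_mult E' (\<phi> x) (\<phi> y)) \<and>
     (\<exists>F. smooth F \<and> (\<forall>x\<in>N_carrier S E. F x = \<phi> x)) \<and>
     (\<exists>G. smooth G \<and> (\<forall>y\<in>N_carrier S' E'. G y \<in> N_carrier S E \<and> \<phi> (G y) = y))"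

definition N_lie_isomorphic :: "'a::finite set \<Rightarrow> 'a set set \<Rightarrow> 'b::finite set \<Rightarrow> 'b set set \<Rightarrow> bool" where
  "N_lie_isomorphic S E S' E' \<longleftrightarrow> (\<exists>\<phi>. N_lie_iso S E S' E' \<phi>)"

end

theory Submission
  imports Defs
begin

definition VS :: "'a::finite set \<Rightarrow> (real^'a) set" where
  "VS S = {v. \<forall>x. x \<notin> S \<longrightarrow> v$x = 0}"

abbreviation ax :: "'a::finite \<Rightarrow> real^'a" where "ax i \<equiv> axis i 1"

lemma ax_nth: "ax i $ k = (if k = i then 1 else 0)"
  by (simp add: axis_def)

lemma vec_sum_axis:
  fixes v :: "real^'a::finite"
  assumes "\<forall>x. x \<notin> A \<longrightarrow> v$x = 0"
  shows "v = (\<Sum>i\<in>A. v$i *\<^sub>R ax i)"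
proof -
  have "(\<Sum>i\<in>A. v$i *\<^sub>R ax i) $ k = v $ k" for k
    using assms by (auto simp: sum_component ax_nth if_distrib cong: if_cong)
  then show ?thesis by (simp add: vec_eq_iff)
qed

lemma N_bracket_nth: "N_bracket E v1 v2 $ i $ j = (if {i, j} \<in> E then v1 $ i * v2 $ j - v1 $ j * v2 $ i else 0)"
  by (simp add: N_bracket_def)

lemma linear_N_bracket2: "linear (\<lambda>y. N_bracket E x (T y))" if "linear T"
proof -
  have add: "T (a + b) = T a + T b" and sc: "T (c *\<^sub>R a) = c *\<^sub>R T a" for a b c
    using that by (simp_all add: linear_add linear_scale)
  show ?thesis
    by (rule linearI) (auto simp: vec_eq_iff N_bracket_nth add sc algebra_simps)
qed

lemma simple_graph_edge:
  assumes "simple_graph S E" "{a,b} \<in> E"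
  shows "a \<noteq> b \<and> a \<in> S \<and> b \<in> S"
proof -
  obtain x y where "{a,b} = {x,y}" "x \<noteq> y" "x \<in> S" "y \<in> S"
    using assms unfolding simple_graph_def by blast
  then show ?thesis by (auto simp: doubleton_eq_iff)
qed

definition nbr :: "'a set set \<Rightarrow> 'a set \<Rightarrow> 'a \<Rightarrow> 'a set" where
  "nbr E S a = {b\<in>S. {a,b} \<in> E}"

lemma bracket_restrict:
  assumes sg: "simple_graph S E" and a: "\<alpha> \<in> S"
  shows "N_bracket E (ax \<alpha>) y = N_bracket E (ax \<alpha>) (\<chi> i. if i \<in> nbr E S \<alpha> then y$i else 0)"
proof -
  have "N_bracket E (ax \<alpha>) y $ i $ j = N_bracket E (ax \<alpha>) (\<chi> i. if i \<in> nbr E S \<alpha> then y$i else 0) $ i $ j" for i j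
  proof (cases "{i,j} \<in> E")
    case True
    then have ij: "i \<noteq> j" "i \<in> S" "j \<in> S" using simple_graph_edge[OF sg] by auto
    have "{j,i} \<in> E" using True by (simp add: insert_commute)
    then show ?thesis using True ij by (auto simp: N_bracket_nth ax_nth nbr_def)
  qed (simp add: N_bracket_nth)
  then show ?thesis by (simp add: vec_eq_iff)
qed

lemma count_R:
  fixes T :: "real^'a::finite \<Rightarrow> real^'b::finite" and T' :: "real^'b \<Rightarrow> real^'a"
  assumes sg: "simple_graph S E" and lin: "linear T"
    and inv: "\<And>z. z \<in> VS S' \<Longrightarrow> T' z \<in> VS S \<and> T (T' z) = z"
    and brk: "\<And>x y x' y'. x \<in> VS S \<Longrightarrow> y \<in> VS S \<Longrightarrow> x' \<in> VS S \<Longrightarrow> y' \<in> VS S \<Longrightarrow>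
               N_bracket E x y = N_bracket E x' y' \<Longrightarrow> N_bracket E' (T x) (T y) = N_bracket E' (T x') (T y')"
    and a: "\<alpha> \<in> S"
    and P: "\<And>p. p \<in> P \<Longrightarrow> \<exists>z\<in>VS S'. \<forall>q\<in>P. N_bracket E' (T (ax \<alpha>)) z $ fst q $ snd q = (if q = p then 1 else 0)"
  shows "card P \<le> card (nbr E S \<alpha>)"
proof -
  define N where "N = nbr E S \<alpha>"
  have NS: "N \<subseteq> S" by (auto simp: N_def nbr_def)
  define B where "B = ax ` N"
  define Pr :: "real^'b^'b \<Rightarrow> real^'b^'b" where "Pr m = (\<chi> i j. if (i,j) \<in> P then m$i$j else 0)" for m
  define Ps where "Ps y = Pr (N_bracket E' (T (ax \<alpha>)) (T y))" for y
  have linPr: "linear Pr" by (rule linearI) (auto simp: vec_eq_iff Pr_def)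
  have linPs: "linear Ps" unfolding Ps_def[abs_def]
    using linear_compose[OF linear_N_bracket2[OF lin] linPr] by (simp add: o_def)
  define unit :: "'b \<times> 'b \<Rightarrow> real^'b^'b" where "unit p = axis (fst p) (axis (snd p) 1)" for p
  define U where "U = unit ` P"
  have UB: "U \<subseteq> Basis" by (auto simp: U_def unit_def Basis_vec_def)
  have indU: "independent U" using independent_substdbasis[OF UB] .
  have injU: "inj_on unit P"
  proof (rule inj_onI)
    fix p q assume "unit p = unit q"
    then have "unit p $ fst p $ snd p = unit q $ fst p $ snd p" by simp
    then show "p = q" by (auto simp: unit_def axis_def split: if_splits simp: prod_eq_iff)
  qed
  have cardU: "card U = card P" unfolding U_def using card_image[OF injU] .
  have aS: "ax \<alpha> \<in> VS S" using a by (auto simp: VS_def ax_nth)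
  have USp: "U \<subseteq> span (Ps ` B)"
  proof
    fix u assume "u \<in> U"
    then obtain p where p: "p \<in> P" and u: "u = unit p" by (auto simp: U_def)
    obtain z where z: "z \<in> VS S'" and zq: "\<forall>q\<in>P. N_bracket E' (T (ax \<alpha>)) z $ fst q $ snd q = (if q = p then 1 else 0)"
      using P[OF p] by blast
    define y where "y = T' z"
    have yS: "y \<in> VS S" and Ty: "T y = z" using inv[OF z] by (auto simp: y_def)
    define y' where "y' = (\<chi> i. if i \<in> N then y$i else 0)"
    have y'S: "y' \<in> VS S" using NS by (auto simp: VS_def y'_def)
    have "N_bracket E' (T (ax \<alpha>)) (T y') = N_bracket E' (T (ax \<alpha>)) (T y)"
      using brk[OF aS y'S aS yS] bracket_restrict[OF sg a, of y] by (simp add: y'_def N_def)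
    then have "Ps y' = Ps y" by (simp add: Ps_def)
    also have "Ps y = unit p"
    proof -
      have "Pr (N_bracket E' (T (ax \<alpha>)) z) $ i $ j = unit p $ i $ j" for i j
        using zq[rule_format, of "(i,j)"] p
        by (cases p) (auto simp: Pr_def unit_def axis_def)
      then show ?thesis by (simp add: Ps_def Ty vec_eq_iff)
    qed
    finally have 1: "Ps y' = u" using u by simp
    have "y' = (\<Sum>i\<in>N. y'$i *\<^sub>R ax i)" by (rule vec_sum_axis) (auto simp: y'_def)
    then have "y' \<in> span B" unfolding B_def
      by (metis (no_types, lifting) image_eqI span_base span_scale span_sum)
    then have "Ps y' \<in> Ps ` span B" by blast
    then show "u \<in> span (Ps ` B)" using 1 span_linear_image[OF linPs] by simp
  qed
  have "card P = card U" using cardU by simp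
  also have "\<dots> \<le> dim (span (Ps ` B))" by (rule independent_card_le_dim[OF USp indU])
  also have "\<dots> \<le> card (Ps ` B)" by (simp add: dim_le_card' B_def)
  also have "\<dots> \<le> card B" by (rule card_image_le) (simp add: B_def)
  also have "\<dots> \<le> card N" unfolding B_def by (rule card_image_le) simp
  finally show ?thesis by (simp add: N_def)
qed

locale half =
  fixes S :: "'a::finite set" and E :: "'a set set" and S' :: "'b::finite set" and E' :: "'b set set"
    and T :: "real^'a \<Rightarrow> real^'b" and T' :: "real^'b \<Rightarrow> real^'a"
  assumes sg: "simple_graph S E" and sg': "simple_graph S' E'"
    and lin: "linear T"
    and Tmap: "\<And>x. x \<in> VS S \<Longrightarrow> T x \<in> VS S'"
    and inv: "\<And>z. z \<in> VS S' \<Longrightarrow> T' z \<in> VS S \<and> T (T' z) = z"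
    and brk: "\<And>x y x' y'. x \<in> VS S \<Longrightarrow> y \<in> VS S \<Longrightarrow> x' \<in> VS S \<Longrightarrow> y' \<in> VS S \<Longrightarrow>
               N_bracket E x y = N_bracket E x' y' \<Longrightarrow> N_bracket E' (T x) (T y) = N_bracket E' (T x') (T y')"
begin

lemma axS: "a \<in> S \<Longrightarrow> ax a \<in> VS S"
  by (auto simp: VS_def ax_nth)

lemma supp_S': "a \<in> S \<Longrightarrow> T (ax a) $ r \<noteq> 0 \<Longrightarrow> r \<in> S'"
  using Tmap[OF axS] unfolding VS_def by blast

lemma R1:
  assumes a: "\<alpha> \<in> S" and r: "T (ax \<alpha>) $ \<rho> \<noteq> 0"
  shows "card (nbr E' S' \<rho>) \<le> card (nbr E S \<alpha>)"
proof -
  define x where "x = T (ax \<alpha>)"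
  have xr: "x $ \<rho> \<noteq> 0" using r by (simp add: x_def)
  define P where "P = Pair \<rho> ` nbr E' S' \<rho>"
  have "card P \<le> card (nbr E S \<alpha>)"
  proof (rule count_R[OF sg lin inv brk a])
    fix p assume "p \<in> P"
    then obtain e where p: "p = (\<rho>, e)" and e: "e \<in> S'" "{\<rho>, e} \<in> E'" by (auto simp: P_def nbr_def)
    have re: "\<rho> \<noteq> e" using simple_graph_edge[OF sg' e(2)] by simp
    define z where "z = (1 / x $ \<rho>) *\<^sub>R ax e"
    have "z \<in> VS S'" using e by (auto simp: z_def VS_def ax_nth)
    moreover have "\<forall>q\<in>P. N_bracket E' x z $ fst q $ snd q = (if q = p then 1 else 0)"
    proof
      fix q assume "q \<in> P"
      then obtain e' where q: "q = (\<rho>, e')" and e': "e' \<in> S'" "{\<rho>, e'} \<in> E'" by (auto simp: P_def nbr_def)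
      show "N_bracket E' x z $ fst q $ snd q = (if q = p then 1 else 0)"
        using e' re xr by (auto simp: q p N_bracket_nth z_def ax_nth)
    qed
    ultimately show "\<exists>z\<in>VS S'. \<forall>q\<in>P. N_bracket E' (T (ax \<alpha>)) z $ fst q $ snd q = (if q = p then 1 else 0)"
      unfolding x_def by blast
  qed (auto simp: x_def)
  moreover have "card P = card (nbr E' S' \<rho>)" unfolding P_def by (rule card_image) (simp add: inj_on_def)
  ultimately show ?thesis by simp
qed

lemma R2:
  assumes a: "\<alpha> \<in> S" and g: "T (ax \<alpha>) $ \<gamma> \<noteq> 0" and r: "T (ax \<alpha>) $ \<rho> \<noteq> 0"
    and re: "{\<rho>, \<epsilon>} \<in> E'" and eg: "\<epsilon> \<noteq> \<gamma>" and ge: "{\<gamma>, \<epsilon>} \<notin> E'"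
  shows "card (nbr E' S' \<gamma>) + 1 \<le> card (nbr E S \<alpha>)"
proof -
  define x where "x = T (ax \<alpha>)"
  have xr: "x $ \<rho> \<noteq> 0" and xg: "x $ \<gamma> \<noteq> 0" using r g by (simp_all add: x_def)
  have rne: "\<rho> \<noteq> \<epsilon>" and eS: "\<epsilon> \<in> S'" and rS: "\<rho> \<in> S'" using simple_graph_edge[OF sg' re] by auto
  have rg: "\<rho> \<noteq> \<gamma>" using re ge by auto
  define P where "P = insert (\<rho>, \<epsilon>) (Pair \<gamma> ` nbr E' S' \<gamma>)"
  have notin: "(\<rho>, \<epsilon>) \<notin> Pair \<gamma> ` nbr E' S' \<gamma>" using rg by auto
  have "card P \<le> card (nbr E S \<alpha>)"
  proof (rule count_R[OF sg lin inv brk a])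
    fix p assume "p \<in> P"
    then consider "p = (\<rho>, \<epsilon>)" | k where "p = (\<gamma>, k)" "k \<in> S'" "{\<gamma>, k} \<in> E'"
      by (auto simp: P_def nbr_def)
    then show "\<exists>z\<in>VS S'. \<forall>q\<in>P. N_bracket E' (T (ax \<alpha>)) z $ fst q $ snd q = (if q = p then 1 else 0)"
    proof cases
      case 1
      define z where "z = (1 / x $ \<rho>) *\<^sub>R ax \<epsilon>"
      have "z \<in> VS S'" using eS by (auto simp: z_def VS_def ax_nth)
      moreover have "\<forall>q\<in>P. N_bracket E' x z $ fst q $ snd q = (if q = p then 1 else 0)"
      proof
        fix q assume "q \<in> P"
        then consider "q = (\<rho>, \<epsilon>)" | k' where "q = (\<gamma>, k')" "k' \<in> S'" "{\<gamma>, k'} \<in> E'"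
          by (auto simp: P_def nbr_def)
        then show "N_bracket E' x z $ fst q $ snd q = (if q = p then 1 else 0)"
        proof cases
          case 1
          then show ?thesis using re rne xr \<open>p = (\<rho>, \<epsilon>)\<close> by (auto simp: N_bracket_nth z_def ax_nth)
        next
          case 2
          then show ?thesis using rg eg ge \<open>p = (\<rho>, \<epsilon>)\<close> by (auto simp: N_bracket_nth z_def ax_nth)
        qed
      qed
      ultimately show ?thesis unfolding x_def by blast
    next
      case 2
      define s where "s = (if \<rho> = k then x $ \<epsilon> / (x $ \<gamma> * x $ \<rho>) else 0)"
      define z where "z = (1 / x $ \<gamma>) *\<^sub>R ax k + s *\<^sub>R ax \<epsilon>"
      have kne: "k \<noteq> \<epsilon>" using 2 ge by auto
      have kg: "k \<noteq> \<gamma>" using simple_graph_edge[OF sg' 2(3)] by auto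
      have "z \<in> VS S'" using eS 2 by (auto simp: z_def VS_def ax_nth)
      moreover have "\<forall>q\<in>P. N_bracket E' x z $ fst q $ snd q = (if q = p then 1 else 0)"
      proof
        fix q assume "q \<in> P"
        then consider "q = (\<rho>, \<epsilon>)" | k' where "q = (\<gamma>, k')" "k' \<in> S'" "{\<gamma>, k'} \<in> E'"
          by (auto simp: P_def nbr_def)
        then show "N_bracket E' x z $ fst q $ snd q = (if q = p then 1 else 0)"
        proof cases
          case 1
          then show ?thesis using re rne xr xg kne rg 2 by (auto simp: N_bracket_nth z_def ax_nth s_def)
        next
          case 3: 2
          have "k' \<noteq> \<epsilon>" using 3 ge by auto
          moreover have "k' \<noteq> \<gamma>" using simple_graph_edge[OF sg' 3(3)] by auto
          ultimately show ?thesis using 3 2 eg xg kg by (auto simp: N_bracket_nth z_def ax_nth)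
        qed
      qed
      ultimately show ?thesis unfolding x_def by blast
    qed
  qed
  moreover have "card P = card (nbr E' S' \<gamma>) + 1"
  proof -
    have "card (Pair \<gamma> ` nbr E' S' \<gamma>) = card (nbr E' S' \<gamma>)" by (rule card_image) (simp add: inj_on_def)
    then show ?thesis unfolding P_def using notin by (simp add: card_insert_if)
  qed
  ultimately show ?thesis by simp
qed

end


lemma hall_lin:
  fixes u :: "'a \<Rightarrow> real^'b::finite"
  assumes "finite A" and "\<forall>\<alpha>\<in>A. \<forall>\<rho>. \<rho> \<notin> B \<longrightarrow> u \<alpha> $ \<rho> = 0"
    and "\<forall>c. (\<Sum>\<alpha>\<in>A. c \<alpha> *\<^sub>R u \<alpha>) = 0 \<longrightarrow> (\<forall>\<alpha>\<in>A. c \<alpha> = 0)"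
  shows "\<exists>\<sigma>. inj_on \<sigma> A \<and> \<sigma> ` A \<subseteq> B \<and> (\<forall>\<alpha>\<in>A. u \<alpha> $ \<sigma> \<alpha> \<noteq> 0)"
  using assms
proof (induction A arbitrary: B u rule: finite_induct)
  case empty
  then show ?case by auto
next
  case (insert a A)
  note fin = insert.hyps(1) and aA = insert.hyps(2)
  have indA: "\<forall>\<alpha>\<in>A. c \<alpha> = 0" if "(\<Sum>\<alpha>\<in>A. c \<alpha> *\<^sub>R u \<alpha>) = 0" for c
  proof -
    define c' where "c' = (\<lambda>\<alpha>. if \<alpha> = a then 0 else c \<alpha>)"
    have "(\<Sum>\<alpha>\<in>insert a A. c' \<alpha> *\<^sub>R u \<alpha>) = (\<Sum>\<alpha>\<in>A. c \<alpha> *\<^sub>R u \<alpha>)"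
      using fin aA by (auto simp: c'_def intro!: sum.cong)
    then have "\<forall>\<alpha>\<in>insert a A. c' \<alpha> = 0" using insert.prems(2) that by auto
    then show ?thesis using aA by (auto simp: c'_def split: if_splits)
  qed
  define zr where "zr \<rho> v = v - (v $ \<rho>) *\<^sub>R ax \<rho>" for \<rho> and v :: "real^'b"
  have "\<exists>\<rho>\<in>B. u a $ \<rho> \<noteq> 0 \<and> (\<forall>c. (\<Sum>\<alpha>\<in>A. c \<alpha> *\<^sub>R zr \<rho> (u \<alpha>)) = 0 \<longrightarrow> (\<forall>\<alpha>\<in>A. c \<alpha> = 0))"
  proof (rule ccontr)
    assume H: "\<not> ?thesis"
    have "\<exists>d. ax \<rho> = (\<Sum>\<alpha>\<in>A. d \<alpha> *\<^sub>R u \<alpha>)" if \<rho>: "\<rho> \<in> B" "u a $ \<rho> \<noteq> 0" for \<rho>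
    proof -
      obtain c where c0: "(\<Sum>\<alpha>\<in>A. c \<alpha> *\<^sub>R zr \<rho> (u \<alpha>)) = 0" and cn: "\<exists>\<alpha>\<in>A. c \<alpha> \<noteq> 0"
        using H \<rho> by blast
      define l where "l = (\<Sum>\<alpha>\<in>A. c \<alpha> * u \<alpha> $ \<rho>)"
      have eq: "(\<Sum>\<alpha>\<in>A. c \<alpha> *\<^sub>R u \<alpha>) = l *\<^sub>R ax \<rho>"
      proof -
        have "(\<Sum>\<alpha>\<in>A. c \<alpha> *\<^sub>R zr \<rho> (u \<alpha>)) = (\<Sum>\<alpha>\<in>A. c \<alpha> *\<^sub>R u \<alpha>) - l *\<^sub>R ax \<rho>"
          by (simp add: zr_def l_def scaleR_diff_right sum_subtractf scaleR_sum_left)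
        then show ?thesis using c0 by simp
      qed
      have "l \<noteq> 0" using indA[of c] eq cn by auto
      then have "ax \<rho> = (\<Sum>\<alpha>\<in>A. (c \<alpha> / l) *\<^sub>R u \<alpha>)"
      proof -
        have "(\<Sum>\<alpha>\<in>A. (c \<alpha> / l) *\<^sub>R u \<alpha>) = (1/l) *\<^sub>R (\<Sum>\<alpha>\<in>A. c \<alpha> *\<^sub>R u \<alpha>)"
          by (simp add: scaleR_sum_right)
        then show ?thesis using eq \<open>l \<noteq> 0\<close> by simp
      qed
      then show ?thesis by (intro exI[of _ "\<lambda>\<alpha>. c \<alpha> / l"])
    qed
    then obtain D where D: "\<And>\<rho>. \<rho> \<in> B \<Longrightarrow> u a $ \<rho> \<noteq> 0 \<Longrightarrow> ax \<rho> = (\<Sum>\<alpha>\<in>A. D \<rho> \<alpha> *\<^sub>R u \<alpha>)"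
      by metis
    have "u a = (\<Sum>\<rho>\<in>B. u a $ \<rho> *\<^sub>R ax \<rho>)"
      by (rule vec_sum_axis) (use insert.prems(1) in auto)
    also have "\<dots> = (\<Sum>\<rho>\<in>B. u a $ \<rho> *\<^sub>R (\<Sum>\<alpha>\<in>A. D \<rho> \<alpha> *\<^sub>R u \<alpha>))"
      by (rule sum.cong) (use D in auto)
    also have "\<dots> = (\<Sum>\<alpha>\<in>A. (\<Sum>\<rho>\<in>B. u a $ \<rho> * D \<rho> \<alpha>) *\<^sub>R u \<alpha>)"
      by (simp add: scaleR_sum_right scaleR_sum_left sum.swap[of _ B])
    finally have ua: "u a = (\<Sum>\<alpha>\<in>A. (\<Sum>\<rho>\<in>B. u a $ \<rho> * D \<rho> \<alpha>) *\<^sub>R u \<alpha>)" .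
    define c where "c = (\<lambda>\<alpha>. if \<alpha> = a then -1 else (\<Sum>\<rho>\<in>B. u a $ \<rho> * D \<rho> \<alpha>))"
    have "(\<Sum>\<alpha>\<in>insert a A. c \<alpha> *\<^sub>R u \<alpha>) = - u a + (\<Sum>\<alpha>\<in>A. (\<Sum>\<rho>\<in>B. u a $ \<rho> * D \<rho> \<alpha>) *\<^sub>R u \<alpha>)"
      using fin aA by (auto simp: c_def intro!: sum.cong)
    also have "\<dots> = 0" using ua by simp
    finally have "\<forall>\<alpha>\<in>insert a A. c \<alpha> = 0" using insert.prems(2) by blast
    then show False by (simp add: c_def)
  qed
  then obtain \<rho> where \<rho>B: "\<rho> \<in> B" and ua\<rho>: "u a $ \<rho> \<noteq> 0"
    and ind': "\<forall>c. (\<Sum>\<alpha>\<in>A. c \<alpha> *\<^sub>R zr \<rho> (u \<alpha>)) = 0 \<longrightarrow> (\<forall>\<alpha>\<in>A. c \<alpha> = 0)" by blast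
  have supp': "\<forall>\<alpha>\<in>A. \<forall>r. r \<notin> B - {\<rho>} \<longrightarrow> (zr \<rho> (u \<alpha>)) $ r = 0"
    using insert.prems(1) by (auto simp: zr_def ax_nth)
  obtain \<sigma> where inj: "inj_on \<sigma> A" and im: "\<sigma> ` A \<subseteq> B - {\<rho>}" and nz: "\<forall>\<alpha>\<in>A. zr \<rho> (u \<alpha>) $ \<sigma> \<alpha> \<noteq> 0"
    using insert.IH[of "B - {\<rho>}" "\<lambda>\<alpha>. zr \<rho> (u \<alpha>)"] supp' ind' by blast
  define \<sigma>' where "\<sigma>' = \<sigma>(a := \<rho>)"
  have "inj_on \<sigma>' (insert a A)"
    using inj im aA by (auto simp: \<sigma>'_def inj_on_def)
  moreover have "\<sigma>' ` insert a A \<subseteq> B" using im \<rho>B aA by (auto simp: \<sigma>'_def)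
  moreover have "\<forall>\<alpha>\<in>insert a A. u \<alpha> $ \<sigma>' \<alpha> \<noteq> 0"
  proof
    fix \<alpha> assume "\<alpha> \<in> insert a A"
    then show "u \<alpha> $ \<sigma>' \<alpha> \<noteq> 0"
    proof
      assume "\<alpha> = a" then show ?thesis using ua\<rho> by (simp add: \<sigma>'_def)
    next
      assume \<alpha>: "\<alpha> \<in> A"
      then have "\<alpha> \<noteq> a" "\<sigma> \<alpha> \<noteq> \<rho>" using aA im by auto
      then show ?thesis using nz \<alpha> by (auto simp: \<sigma>'_def zr_def ax_nth)
    qed
  qed
  ultimately show ?case by blast
qed


definition tw :: "'a set set \<Rightarrow> 'a \<Rightarrow> 'a \<Rightarrow> bool" where
  "tw E a b \<longleftrightarrow> (\<forall>e. e \<noteq> a \<longrightarrow> e \<noteq> b \<longrightarrow> ({a,e} \<in> E \<longleftrightarrow> {b,e} \<in> E))"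

definition domn :: "'a set set \<Rightarrow> 'a \<Rightarrow> 'a \<Rightarrow> bool" where
  "domn E a b \<longleftrightarrow> (\<forall>e. {a,e} \<in> E \<longrightarrow> e \<noteq> b \<longrightarrow> {b,e} \<in> E)"

lemma tw_sym: "tw E a b \<Longrightarrow> tw E b a"
  unfolding tw_def by blast

lemma tw_trans:
  assumes ab: "tw E a b" and bc: "tw E b c" shows "tw E a c"
  unfolding tw_def
proof (intro allI impI)
  fix e assume ea: "e \<noteq> a" and ec: "e \<noteq> c"
  show "({a,e} \<in> E) = ({c,e} \<in> E)"
  proof (cases "a = b \<or> b = c \<or> a = c")
    case True
    then show ?thesis using ab bc ea ec unfolding tw_def by auto
  next
    case False
    then have d: "a \<noteq> b" "b \<noteq> c" "a \<noteq> c" by auto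
    show ?thesis
    proof (cases "e = b")
      case False
      then show ?thesis using ab bc ea ec unfolding tw_def by blast
    next
      case True
      have 1: "({b,a} \<in> E) = ({c,a} \<in> E)" using bc d unfolding tw_def by auto
      have 2: "({a,c} \<in> E) = ({b,c} \<in> E)" using ab d unfolding tw_def by auto
      show ?thesis using 1 2 True by (auto simp: insert_commute)
    qed
  qed
qed

lemma finite_nbr: "simple_graph S E \<Longrightarrow> finite (nbr E S a)"
  by (auto simp: simple_graph_def nbr_def)

lemma dom_eq_tw:
  assumes sg: "simple_graph S E" and d: "domn E a b" and c: "card (nbr E S a) = card (nbr E S b)"
    and aS: "a \<in> S" and bS: "b \<in> S"
  shows "tw E a b"
  unfolding tw_def
proof (intro allI impI)
  fix e assume ea: "e \<noteq> a" and eb: "e \<noteq> b"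
  show "({a,e} \<in> E) = ({b,e} \<in> E)"
  proof
    assume "{a,e} \<in> E" then show "{b,e} \<in> E" using d eb unfolding domn_def by blast
  next
    assume be: "{b,e} \<in> E"
    show "{a,e} \<in> E"
    proof (rule ccontr)
      assume ae: "{a,e} \<notin> E"
      have eS: "e \<in> S" using simple_graph_edge[OF sg be] by auto
      define f where "f x = (if x = b then a else x)" for x
      have "inj_on f (nbr E S a)"
        by (auto simp: inj_on_def f_def nbr_def dest: simple_graph_edge[OF sg])
      moreover have "f ` nbr E S a \<subseteq> nbr E S b - {e}"
      proof
        fix y assume "y \<in> f ` nbr E S a"
        then obtain x where x: "x \<in> nbr E S a" and y: "y = f x" by blast
        have xa: "{a,x} \<in> E" "x \<in> S" using x by (auto simp: nbr_def)
        show "y \<in> nbr E S b - {e}"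
        proof (cases "x = b")
          case True
          then show ?thesis using xa aS ea y by (auto simp: f_def nbr_def insert_commute)
        next
          case False
          then have "{b,x} \<in> E" using d xa unfolding domn_def by blast
          moreover have "x \<noteq> e" using xa ae by auto
          ultimately show ?thesis using xa y False by (auto simp: f_def nbr_def)
        qed
      qed
      ultimately have "card (nbr E S a) \<le> card (nbr E S b - {e})"
        by (intro card_inj_on_le) (auto simp: finite_nbr[OF sg])
      also have "\<dots> < card (nbr E S b)"
        using be eS finite_nbr[OF sg, of b] by (intro card_Diff1_less) (auto simp: nbr_def)
      finally show False using c by simp
    qed
  qed
qed


locale full = h1: half S E S' E' T T' + h2: half S' E' S E T' T
  for S :: "'a::finite set" and E and S' :: "'b::finite set" and E' and T and T'
begin

abbreviation "t \<alpha> \<equiv> T (ax \<alpha>)"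
abbreviation "dg \<alpha> \<equiv> card (nbr E S \<alpha>)"
abbreviation "dg' \<rho> \<equiv> card (nbr E' S' \<rho>)"

lemma indep_cols: "(\<Sum>\<alpha>\<in>S. c \<alpha> *\<^sub>R t \<alpha>) = 0 \<Longrightarrow> \<forall>\<alpha>\<in>S. c \<alpha> = 0"
proof -
  assume H: "(\<Sum>\<alpha>\<in>S. c \<alpha> *\<^sub>R t \<alpha>) = 0"
  have "T' (\<Sum>\<alpha>\<in>S. c \<alpha> *\<^sub>R t \<alpha>) = (\<Sum>\<alpha>\<in>S. c \<alpha> *\<^sub>R T' (t \<alpha>))"
    by (simp add: linear_sum[OF h2.lin] linear_scale[OF h2.lin])
  also have "\<dots> = (\<Sum>\<alpha>\<in>S. c \<alpha> *\<^sub>R ax \<alpha>)"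
    by (rule sum.cong) (auto dest: h2.inv[OF h1.axS])
  finally have "(\<Sum>\<alpha>\<in>S. c \<alpha> *\<^sub>R ax \<alpha>) = 0" using H linear_0[OF h2.lin] by simp
  then have "(\<Sum>\<alpha>\<in>S. c \<alpha> *\<^sub>R ax \<alpha>) $ \<beta> = 0" for \<beta> by simp
  moreover have "(\<Sum>\<alpha>\<in>S. c \<alpha> *\<^sub>R ax \<alpha>) $ \<beta> = (if \<beta> \<in> S then c \<beta> else 0)" for \<beta>
    by (simp add: sum_component ax_nth if_distrib cong: if_cong)
  ultimately show ?thesis by (metis (full_types))
qed

lemma exists_sigma:
  "\<exists>\<sigma>. inj_on \<sigma> S \<and> \<sigma> ` S \<subseteq> S' \<and> (\<forall>\<alpha>\<in>S. t \<alpha> $ \<sigma> \<alpha> \<noteq> 0)"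
proof (rule hall_lin)
  show "finite S" by simp
  show "\<forall>\<alpha>\<in>S. \<forall>\<rho>. \<rho> \<notin> S' \<longrightarrow> t \<alpha> $ \<rho> = 0"
    using h1.Tmap[OF h1.axS] by (auto simp: VS_def)
  show "\<forall>c. (\<Sum>\<alpha>\<in>S. c \<alpha> *\<^sub>R t \<alpha>) = 0 \<longrightarrow> (\<forall>\<alpha>\<in>S. c \<alpha> = 0)"
    using indep_cols by blast
qed

end

sublocale full \<subseteq> sw: full S' E' S E T' T
  by (intro full.intro h1.half_axioms h2.half_axioms)

context full begin

lemma good_sigma: "\<exists>\<sigma>. bij_betw \<sigma> S S' \<and> (\<forall>\<alpha>\<in>S. t \<alpha> $ \<sigma> \<alpha> \<noteq> 0) \<and> (\<forall>\<alpha>\<in>S. dg' (\<sigma> \<alpha>) = dg \<alpha>)"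
proof -
  obtain \<sigma> where si: "inj_on \<sigma> S" and ss: "\<sigma> ` S \<subseteq> S'" and sn: "\<forall>\<alpha>\<in>S. t \<alpha> $ \<sigma> \<alpha> \<noteq> 0"
    using exists_sigma by blast
  obtain \<tau> where ti: "inj_on \<tau> S'" and ts: "\<tau> ` S' \<subseteq> S" and tn: "\<forall>\<rho>\<in>S'. T' (ax \<rho>) $ \<tau> \<rho> \<noteq> 0"
    using sw.exists_sigma by blast
  have c1: "card S \<le> card S'" using card_inj_on_le[OF si ss] by simp
  have c2: "card S' \<le> card S" using card_inj_on_le[OF ti ts] by simp
  have "\<sigma> ` S = S'" using ss c1 c2 by (intro card_subset_eq) (auto simp: card_image[OF si])
  then have bs: "bij_betw \<sigma> S S'" using si by (simp add: bij_betw_def)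
  have "\<tau> ` S' = S" using ts c1 c2 by (intro card_subset_eq) (auto simp: card_image[OF ti])
  then have bt: "bij_betw \<tau> S' S" using ti by (simp add: bij_betw_def)
  have le1: "\<forall>\<alpha>\<in>S. dg' (\<sigma> \<alpha>) \<le> dg \<alpha>" using h1.R1 sn by blast
  have le2: "\<forall>\<rho>\<in>S'. dg (\<tau> \<rho>) \<le> dg' \<rho>" using h2.R1 tn by blast
  have "(\<Sum>\<alpha>\<in>S. dg \<alpha>) = (\<Sum>\<rho>\<in>S'. dg (\<tau> \<rho>))" by (rule sum.reindex_bij_betw[OF bt, symmetric])
  also have "\<dots> \<le> (\<Sum>\<rho>\<in>S'. dg' \<rho>)" using le2 by (intro sum_mono) auto
  also have "\<dots> = (\<Sum>\<alpha>\<in>S. dg' (\<sigma> \<alpha>))" by (rule sum.reindex_bij_betw[OF bs, symmetric])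
  finally have sle: "(\<Sum>\<alpha>\<in>S. dg \<alpha>) \<le> (\<Sum>\<alpha>\<in>S. dg' (\<sigma> \<alpha>))" .
  have "\<forall>\<alpha>\<in>S. dg' (\<sigma> \<alpha>) = dg \<alpha>"
  proof (rule ccontr)
    assume "\<not> ?thesis"
    then obtain a where "a \<in> S" "dg' (\<sigma> a) < dg a" using le1 by (meson le_neq_implies_less)
    then have "(\<Sum>\<alpha>\<in>S. dg' (\<sigma> \<alpha>)) < (\<Sum>\<alpha>\<in>S. dg \<alpha>)"
      using le1 by (intro sum_strict_mono_ex1) auto
    then show False using sle by simp
  qed
  then show ?thesis using bs sn by blast
qed

lemma brk_zero:
  assumes a: "\<alpha> \<in> S" and b: "\<beta> \<in> S" and ne: "{\<alpha>,\<beta>} \<notin> E"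
  shows "N_bracket E' (t \<alpha>) (t \<beta>) = 0"
proof -
  have "N_bracket E (ax \<alpha>) (ax \<beta>) = N_bracket E 0 0"
    using ne by (auto simp: vec_eq_iff N_bracket_nth ax_nth insert_commute)
  then have "N_bracket E' (t \<alpha>) (t \<beta>) = N_bracket E' (T 0) (T 0)"
    using h1.brk[OF h1.axS[OF a] h1.axS[OF b]] by (simp add: VS_def)
  then show ?thesis by (simp add: linear_0[OF h1.lin] vec_eq_iff N_bracket_nth)
qed

context
  fixes \<sigma>
  assumes bs: "bij_betw \<sigma> S S'" and sn: "\<forall>\<alpha>\<in>S. t \<alpha> $ \<sigma> \<alpha> \<noteq> 0" and sd: "\<forall>\<alpha>\<in>S. dg' (\<sigma> \<alpha>) = dg \<alpha>"
begin

lemma dom_lemma: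
  assumes m: "\<mu> \<in> S" and r: "t \<mu> $ \<rho> \<noteq> 0"
  shows "domn E' \<rho> (\<sigma> \<mu>)"
  unfolding domn_def
proof (intro allI impI)
  fix e assume re: "{\<rho>, e} \<in> E'" and en: "e \<noteq> \<sigma> \<mu>"
  show "{\<sigma> \<mu>, e} \<in> E'"
  proof (rule ccontr)
    assume "{\<sigma> \<mu>, e} \<notin> E'"
    from h1.R2[OF m _ r re en this] sn m have "dg' (\<sigma> \<mu>) + 1 \<le> dg \<mu>" by blast
    then show False using sd m by simp
  qed
qed

lemma sigma_S': "\<alpha> \<in> S \<Longrightarrow> \<sigma> \<alpha> \<in> S'"
  using bs by (auto simp: bij_betw_def)

lemma nonedge:
  assumes a: "\<alpha> \<in> S" and b: "\<beta> \<in> S" and ab: "\<alpha> \<noteq> \<beta>" and ne: "{\<alpha>,\<beta>} \<notin> E"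
  shows "{\<sigma> \<alpha>, \<sigma> \<beta>} \<notin> E'"
proof
  assume ed: "{\<sigma> \<alpha>, \<sigma> \<beta>} \<in> E'"
  define \<gamma> where "\<gamma> = \<sigma> \<alpha>"
  define \<delta> where "\<delta> = \<sigma> \<beta>"
  have gd: "{\<gamma>, \<delta>} \<in> E'" using ed by (simp add: \<gamma>_def \<delta>_def)
  have gS: "\<gamma> \<in> S'" and dS: "\<delta> \<in> S'" and gnd: "\<gamma> \<noteq> \<delta>" using simple_graph_edge[OF h1.sg' gd] by auto
  have bz: "N_bracket E' (t \<alpha>) (t \<beta>) = 0" by (rule brk_zero[OF a b ne])
  have minor0: "t \<alpha> $ k1 * t \<beta> $ k2 - t \<alpha> $ k2 * t \<beta> $ k1 = 0" if "{k1, k2} \<in> E'" for k1 k2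
  proof -
    have "N_bracket E' (t \<alpha>) (t \<beta>) $ k1 $ k2 = 0" using bz by simp
    then show ?thesis using that by (simp add: N_bracket_nth)
  qed
  have tag: "t \<alpha> $ \<gamma> \<noteq> 0" and tbd: "t \<beta> $ \<delta> \<noteq> 0" using sn a b by (auto simp: \<gamma>_def \<delta>_def)
  have "t \<alpha> $ \<delta> * t \<beta> $ \<gamma> \<noteq> 0" using minor0[OF gd] tag tbd by auto
  then have tad: "t \<alpha> $ \<delta> \<noteq> 0" and tbg: "t \<beta> $ \<gamma> \<noteq> 0" by auto
  have "dg' \<delta> \<le> dg \<alpha>" using h1.R1[OF a tad] .
  moreover have "dg' \<gamma> \<le> dg \<beta>" using h1.R1[OF b tbg] .
  moreover have "dg' \<gamma> = dg \<alpha>" "dg' \<delta> = dg \<beta>" using sd a b by (auto simp: \<gamma>_def \<delta>_def)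
  ultimately have dgd: "dg' \<gamma> = dg' \<delta>" and dga: "dg \<alpha> = dg' \<gamma>" by auto
  define d where "d = dg' \<gamma>"
  have "domn E' \<delta> \<gamma>" using dom_lemma[OF a tad] by (simp add: \<gamma>_def)
  then have twdg: "tw E' \<delta> \<gamma>" using dom_eq_tw[OF h1.sg' _ _ dS gS] dgd by simp
  define K where "K = {\<kappa>\<in>S'. dg' \<kappa> = d \<and> tw E' \<kappa> \<gamma>}"
  define M where "M = {\<mu>\<in>S. \<sigma> \<mu> \<in> K}"
  have gK: "\<gamma> \<in> K" using gS by (auto simp: K_def d_def tw_def)
  have dK: "\<delta> \<in> K" using dS twdg dgd by (auto simp: K_def d_def)
  have aM: "\<alpha> \<in> M" and bM: "\<beta> \<in> M" using a b gK dK by (auto simp: M_def \<gamma>_def \<delta>_def)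
  have KS: "K \<subseteq> S'" by (auto simp: K_def)
  have adjg: "{\<kappa>, \<gamma>} \<in> E'" if k: "\<kappa> \<in> K" "\<kappa> \<noteq> \<gamma>" for \<kappa>
  proof (cases "\<kappa> = \<delta>")
    case True then show ?thesis using gd by (simp add: insert_commute)
  next
    case False
    have "tw E' \<kappa> \<delta>" using k twdg by (auto simp: K_def intro: tw_trans tw_sym)
    then show ?thesis using False k gd gnd unfolding tw_def by (auto simp: insert_commute)
  qed
  have clique: "{k1, k2} \<in> E'" if "k1 \<in> K" "k2 \<in> K" "k1 \<noteq> k2" for k1 k2
  proof -
    consider "k1 = \<gamma>" | "k2 = \<gamma>" | "k1 \<noteq> \<gamma>" "k2 \<noteq> \<gamma>" by blast
    then show ?thesis
    proof cases
      case 1 then show ?thesis using adjg[of k2] that by (simp add: insert_commute)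
    next
      case 2 then show ?thesis using adjg[of k1] that by simp
    next
      case 3
      have "tw E' k1 \<gamma>" using that by (simp add: K_def)
      then show ?thesis using adjg[of k2] that 3 unfolding tw_def by (auto simp: insert_commute)
    qed
  qed
  have minK: "t \<alpha> $ k1 * t \<beta> $ k2 = t \<alpha> $ k2 * t \<beta> $ k1" if "k1 \<in> K" "k2 \<in> K" for k1 k2
    using minor0[OF clique[OF that]] by (cases "k1 = k2") auto
  define rK :: "real^'b \<Rightarrow> real^'b" where "rK v = (\<chi> k. if k \<in> K then v $ k else 0)" for v
  have linrK: "linear rK" by (rule linearI) (auto simp: rK_def vec_eq_iff)
  have spanK: "ax \<rho> \<in> span (rK ` t ` M)" if rho: "\<rho> \<in> K" for \<rho>
  proof -
    have rS: "\<rho> \<in> S'" using rho KS by auto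
    define c where "c = T' (ax \<rho>)"
    have cS: "c \<in> VS S" and Tc: "T c = ax \<rho>" using h1.inv[OF h2.axS[OF rS]] by (auto simp: c_def)
    have "c = (\<Sum>\<mu>\<in>S. c $ \<mu> *\<^sub>R ax \<mu>)" by (rule vec_sum_axis) (use cS in \<open>auto simp: VS_def\<close>)
    then have "T c = (\<Sum>\<mu>\<in>S. c $ \<mu> *\<^sub>R t \<mu>)"
      by (metis (no_types, lifting) h1.lin linear_scale linear_sum sum.cong)
    then have "rK (ax \<rho>) = (\<Sum>\<mu>\<in>S. c $ \<mu> *\<^sub>R rK (t \<mu>))"
      using Tc by (simp add: linear_sum[OF linrK] linear_scale[OF linrK])
    also have "\<dots> = (\<Sum>\<mu>\<in>M. c $ \<mu> *\<^sub>R rK (t \<mu>))"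
    proof (rule sum.mono_neutral_right)
      show "finite S" by simp
      show "M \<subseteq> S" by (auto simp: M_def)
      show "\<forall>\<mu>\<in>S - M. c $ \<mu> *\<^sub>R rK (t \<mu>) = 0"
      proof (intro ballI, rule ccontr)
        fix \<mu> assume mu: "\<mu> \<in> S - M" and nz: "c $ \<mu> *\<^sub>R rK (t \<mu>) \<noteq> 0"
        then have cm: "c $ \<mu> \<noteq> 0" and rk: "rK (t \<mu>) \<noteq> 0" by auto
        then obtain \<kappa> where kK: "\<kappa> \<in> K" and tk: "t \<mu> $ \<kappa> \<noteq> 0"
          by (auto simp: rK_def vec_eq_iff split: if_splits)
        have mS: "\<mu> \<in> S" using mu by simp
        have "dg \<mu> \<le> dg' \<rho>" using h2.R1[OF rS] cm by (simp add: c_def)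
        moreover have "dg' \<kappa> \<le> dg \<mu>" using h1.R1[OF mS tk] .
        moreover have "dg' \<kappa> = d" "dg' \<rho> = d" using kK rho by (auto simp: K_def)
        ultimately have dm: "dg \<mu> = d" by simp
        have smS: "\<sigma> \<mu> \<in> S'" using sigma_S'[OF mS] .
        have "domn E' \<kappa> (\<sigma> \<mu>)" using dom_lemma[OF mS tk] .
        moreover have "dg' \<kappa> = dg' (\<sigma> \<mu>)" using sd mS dm kK by (auto simp: K_def)
        ultimately have "tw E' \<kappa> (\<sigma> \<mu>)" using dom_eq_tw[OF h1.sg'] kK KS smS by blast
        then have "tw E' (\<sigma> \<mu>) \<gamma>" using kK by (auto simp: K_def intro: tw_trans tw_sym)
        then have "\<sigma> \<mu> \<in> K" using smS sd mS dm by (auto simp: K_def)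
        then show False using mu by (auto simp: M_def)
      qed
    qed
    also have "\<dots> \<in> span (rK ` t ` M)"
      by (intro span_sum span_scale span_base) auto
    finally have "rK (ax \<rho>) \<in> span (rK ` t ` M)" .
    moreover have "rK (ax \<rho>) = ax \<rho>" using rho by (auto simp: rK_def ax_nth vec_eq_iff)
    ultimately show ?thesis by simp
  qed
  obtain x where xM: "x \<in> M" and xsp: "rK (t x) \<in> span (rK ` t ` (M - {x}))"
  proof (cases "rK (t \<alpha>) = 0")
    case True
    then show ?thesis using that[OF aM] by (simp add: span_zero)
  next
    case False
    then obtain k0 where k0: "k0 \<in> K" "t \<alpha> $ k0 \<noteq> 0" by (auto simp: rK_def vec_eq_iff split: if_splits)
    define l where "l = t \<beta> $ k0 / t \<alpha> $ k0"
    have "rK (t \<beta>) = l *\<^sub>R rK (t \<alpha>)"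
    proof -
      have "t \<beta> $ k = l * t \<alpha> $ k" if "k \<in> K" for k
        using minK[OF k0(1) that] k0(2) by (simp add: l_def field_simps)
      then show ?thesis by (auto simp: rK_def vec_eq_iff)
    qed
    moreover have "rK (t \<alpha>) \<in> span (rK ` t ` (M - {\<beta>}))"
      using aM ab by (intro span_base) auto
    ultimately have "rK (t \<beta>) \<in> span (rK ` t ` (M - {\<beta>}))" by (simp add: span_scale)
    then show ?thesis using that[OF bM] by simp
  qed
  have "rK ` t ` M = insert (rK (t x)) (rK ` t ` (M - {x}))" using xM by blast
  then have sp: "span (rK ` t ` M) = span (rK ` t ` (M - {x}))" using span_redundant[OF xsp] by simp
  have axK: "ax ` K \<subseteq> span (rK ` t ` (M - {x}))" using spanK sp by auto
  have indK: "independent (ax ` K)"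
    by (rule independent_substdbasis) (auto simp: Basis_vec_def)
  have injax: "inj_on ax K" by (rule inj_onI) (metis ax_nth one_neq_zero)
  have "card K = card (ax ` K)" using card_image[OF injax] by simp
  also have "\<dots> \<le> dim (span (rK ` t ` (M - {x})))" by (rule independent_card_le_dim[OF axK indK])
  also have "\<dots> \<le> card (rK ` t ` (M - {x}))" by (simp add: dim_span dim_le_card')
  also have "\<dots> \<le> card (M - {x})"
  proof -
    have "rK ` t ` (M - {x}) = (\<lambda>m. rK (t m)) ` (M - {x})" by auto
    then show ?thesis by (simp add: card_image_le)
  qed
  also have "\<dots> = card M - 1" using xM by simp
  finally have cK: "card K \<le> card M - 1" .
  have "bij_betw \<sigma> M K"
  proof -
    have "inj_on \<sigma> M" using bs by (auto simp: bij_betw_def M_def intro: inj_on_subset)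
    moreover have "\<sigma> ` M = K"
    proof
      show "\<sigma> ` M \<subseteq> K" by (auto simp: M_def)
      show "K \<subseteq> \<sigma> ` M"
      proof
        fix k assume "k \<in> K"
        then have "k \<in> \<sigma> ` S" using KS bs by (auto simp: bij_betw_def)
        then show "k \<in> \<sigma> ` M" using \<open>k \<in> K\<close> by (auto simp: M_def)
      qed
    qed
    ultimately show ?thesis by (simp add: bij_betw_def)
  qed
  then have "card M = card K" by (rule bij_betw_same_card)
  moreover have "card K \<ge> 1" using gK by (metis card_0_eq finite less_one not_le empty_iff)
  ultimately show False using cK by simp
qed

lemma iso: "graph_iso S E S' E'"
  unfolding graph_iso_def
proof (intro exI conjI ballI)
  show "bij_betw \<sigma> S S'" by (rule bs)
  fix a b assume a: "a \<in> S" and b: "b \<in> S"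
  show "({a, b} \<in> E) = ({\<sigma> a, \<sigma> b} \<in> E')"
  proof (cases "a = b")
    case True
    then show ?thesis using simple_graph_edge[OF h1.sg, of a a] simple_graph_edge[OF h1.sg', of "\<sigma> a" "\<sigma> a"] by auto
  next
    case ab: False
    show ?thesis
    proof
      assume ed: "{a,b} \<in> E"
      define A where "A = {c\<in>S. {\<sigma> a, \<sigma> c} \<in> E'}"
      have AN: "A \<subseteq> nbr E S a"
      proof
        fix c assume "c \<in> A"
        then have c: "c \<in> S" "{\<sigma> a, \<sigma> c} \<in> E'" by (auto simp: A_def)
        then have "a \<noteq> c" using simple_graph_edge[OF h1.sg'] by auto
        then have "{a, c} \<in> E" using nonedge[OF a c(1)] c(2) by blast
        then show "c \<in> nbr E S a" using c by (simp add: nbr_def)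
      qed
      have "bij_betw \<sigma> A (nbr E' S' (\<sigma> a))"
      proof -
        have "inj_on \<sigma> A" using bs by (auto simp: bij_betw_def A_def intro: inj_on_subset)
        moreover have "\<sigma> ` A = nbr E' S' (\<sigma> a)"
        proof
          show "\<sigma> ` A \<subseteq> nbr E' S' (\<sigma> a)" by (auto simp: A_def nbr_def sigma_S')
          show "nbr E' S' (\<sigma> a) \<subseteq> \<sigma> ` A"
          proof
            fix r assume r: "r \<in> nbr E' S' (\<sigma> a)"
            then have "r \<in> \<sigma> ` S" using bs by (auto simp: bij_betw_def nbr_def)
            then obtain c where "c \<in> S" "r = \<sigma> c" by blast
            then show "r \<in> \<sigma> ` A" using r by (auto simp: A_def nbr_def)
          qed
        qed
        ultimately show ?thesis by (simp add: bij_betw_def)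
      qed
      then have "card A = dg' (\<sigma> a)" by (rule bij_betw_same_card)
      also have "\<dots> = dg a" using sd a by simp
      finally have "A = nbr E S a" using AN by (intro card_subset_eq) auto
      then have "b \<in> A" using ed b by (simp add: nbr_def)
      then show "{\<sigma> a, \<sigma> b} \<in> E'" by (simp add: A_def)
    next
      assume "{\<sigma> a, \<sigma> b} \<in> E'"
      then show "{a, b} \<in> E" using nonedge[OF a b ab] by blast
    qed
  qed
qed

end

lemma full_iso: "graph_iso S E S' E'"
  using good_sigma iso by blast

end


lemma additive_cont_linear:
  fixes f :: "'x::real_normed_vector \<Rightarrow> 'y::real_normed_vector"
  assumes add: "\<And>a b. f (a + b) = f a + f b" and cont: "continuous_on UNIV f"
  shows "linear f"
proof -
  have f0: "f 0 = 0" using add[of 0 0] by simp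
  have fn: "f (of_nat n *\<^sub>R y) = of_nat n *\<^sub>R f y" for n y
  proof (induction n)
    case 0 then show ?case using f0 by simp
  next
    case (Suc n)
    have "f (of_nat (Suc n) *\<^sub>R y) = f (y + of_nat n *\<^sub>R y)" by (simp add: algebra_simps)
    also have "\<dots> = f y + of_nat n *\<^sub>R f y" using Suc add by simp
    finally show ?case by (simp add: algebra_simps)
  qed
  have fneg: "f (- y) = - f y" for y
    using add[of y "- y"] f0 by (metis add.commute eq_neg_iff_add_eq_0 right_minus)
  have fi: "f (of_int k *\<^sub>R y) = of_int k *\<^sub>R f y" for k y
  proof (cases "k \<ge> 0")
    case True
    define n where "n = nat k"
    have k: "of_int k = (of_nat n :: real)" using True by (simp add: n_def)
    show ?thesis unfolding k by (rule fn)
  next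
    case False
    define n where "n = nat (- k)"
    have k: "of_int k = - (of_nat n :: real)" using False by (simp add: n_def)
    have "f (of_int k *\<^sub>R y) = f (- (of_nat n *\<^sub>R y))" unfolding k by simp
    also have "\<dots> = - f (of_nat n *\<^sub>R y)" by (rule fneg)
    also have "\<dots> = of_int k *\<^sub>R f y" unfolding k fn by simp
    finally show ?thesis .
  qed
  have fq: "f (r *\<^sub>R y) = r *\<^sub>R f y" if rq: "r \<in> \<rat>" for r y
  proof -
    obtain a b where b: "0 < b" and r: "r = of_int a / of_int b" using Rats_cases'[OF rq] by metis
    have bz: "real_of_int b \<noteq> 0" using b by simp
    have "of_int b *\<^sub>R (r *\<^sub>R y) = of_int a *\<^sub>R y" using bz by (simp add: r)
    then have "of_int b *\<^sub>R f (r *\<^sub>R y) = of_int a *\<^sub>R f y" using fi by metis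
    then have "(1 / of_int b) *\<^sub>R (of_int b *\<^sub>R f (r *\<^sub>R y)) = (1 / of_int b) *\<^sub>R (of_int a *\<^sub>R f y)" by simp
    then show ?thesis using bz by (simp add: r)
  qed
  have sc: "f (r *\<^sub>R y) = r *\<^sub>R f y" for r y
  proof -
    define g where "g s = f (s *\<^sub>R y) - s *\<^sub>R f y" for s
    have "continuous_on UNIV g"
      unfolding g_def
      by (intro continuous_intros continuous_on_compose2[OF cont]) auto
    then have "continuous_on (closure \<rat>) g" by (simp add: Rats_closure_real)
    moreover have "\<And>s. s \<in> \<rat> \<Longrightarrow> g s = 0" using fq by (simp add: g_def)
    moreover have "r \<in> closure \<rat>" using Rats_closure_real by simp
    ultimately have "g r = 0" by (rule continuous_constant_on_closure)
    then show ?thesis by (simp add: g_def)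
  qed
  show ?thesis by (rule linearI) (use add sc in auto)
qed


definition cent :: "'a::finite set set \<Rightarrow> real^'a^'a \<Rightarrow> bool" where
  "cent E c \<longleftrightarrow> (\<forall>i j. c $ i $ j = - (c $ j $ i)) \<and> (\<forall>i j. {i, j} \<notin> E \<longrightarrow> c $ i $ j = 0)"

lemma carrier_iff: "(v, c) \<in> N_carrier S E \<longleftrightarrow> v \<in> VS S \<and> cent E c"
  by (simp add: N_carrier_def VS_def cent_def)

lemma mult_eq: "N_mult E (v, c) (w, d) = (v + w, c + d + (1/2) *\<^sub>R N_bracket E v w)"
  by (simp add: N_mult_def)

lemma brk_0r[simp]: "N_bracket E v 0 = 0" and brk_0l[simp]: "N_bracket E 0 w = 0"
  by (simp_all add: vec_eq_iff N_bracket_nth)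

lemma brk_swap: "N_bracket E w v = - N_bracket E v w"
  by (simp add: vec_eq_iff N_bracket_nth insert_commute)

lemma brk_scale: "N_bracket E (a *\<^sub>R v) w = a *\<^sub>R N_bracket E v w"
  by (auto simp: vec_eq_iff N_bracket_nth algebra_simps)

lemma cent_brk: "cent E (N_bracket E x y)"
  unfolding cent_def N_bracket_nth by (simp add: insert_commute)

lemma cent_add: assumes "cent E c" "cent E d" shows "cent E (c + d)"
  unfolding cent_def
proof (intro conjI allI impI)
  fix i j
  have "c $ i $ j = - (c $ j $ i)" "d $ i $ j = - (d $ j $ i)" using assms unfolding cent_def by blast+
  then show "(c + d) $ i $ j = - ((c + d) $ j $ i)" by simp
next
  fix i j assume "{i,j} \<notin> E"
  then have "c $ i $ j = 0" "d $ i $ j = 0" using assms unfolding cent_def by blast+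
  then show "(c + d) $ i $ j = 0" by simp
qed
lemma cent_0: "cent E 0"
  by (simp add: cent_def)
lemma sum_delta2:
  assumes "finite S" "k \<in> S" "l \<in> S"
  shows "(\<Sum>i\<in>S. \<Sum>j\<in>S. (if k = i \<and> l = j then g i j else (0::real))) = g k l"
proof -
  have "(\<Sum>i\<in>S. \<Sum>j\<in>S. (if k = i \<and> l = j then g i j else (0::real)))
      = (\<Sum>i\<in>S. if k = i then (\<Sum>j\<in>S. if l = j then g i j else 0) else 0)"
    by (intro sum.cong refl) auto
  also have "\<dots> = (\<Sum>j\<in>S. if l = j then g k j else 0)" using assms by (simp only: sum.delta' if_True)
  also have "\<dots> = g k l" using assms by (simp only: sum.delta' if_True)
  finally show ?thesis .
qed

lemma brk_term:
  assumes "{k, l} \<in> E"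
  shows "N_bracket E (a *\<^sub>R ax i) (ax j) $ k $ l
     = (if k = i \<and> l = j then a else 0) - (if l = i \<and> k = j then a else 0)"
  using assms by (cases "k = i"; cases "l = j"; cases "l = i"; cases "k = j"; simp add: N_bracket_nth ax_nth)

lemma cent_decomp:
  assumes sg: "simple_graph S E" and c: "cent E c"
  shows "c = (\<Sum>i\<in>S. \<Sum>j\<in>S. N_bracket E (((1/2) * c $ i $ j) *\<^sub>R ax i) (ax j))"
proof -
  have fin: "finite S" using sg by (simp add: simple_graph_def)
  have "(\<Sum>i\<in>S. \<Sum>j\<in>S. N_bracket E (((1/2) * c $ i $ j) *\<^sub>R ax i) (ax j)) $ k $ l = c $ k $ l" for k l
  proof (cases "{k, l} \<in> E")
    case True
    then have kl: "k \<noteq> l" "k \<in> S" "l \<in> S" using simple_graph_edge[OF sg] by auto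
    have "(\<Sum>i\<in>S. \<Sum>j\<in>S. N_bracket E (((1/2) * c $ i $ j) *\<^sub>R ax i) (ax j)) $ k $ l
        = (\<Sum>i\<in>S. \<Sum>j\<in>S. N_bracket E (((1/2) * c $ i $ j) *\<^sub>R ax i) (ax j) $ k $ l)"
      by (simp add: sum_component)
    also have "\<dots> = (\<Sum>i\<in>S. \<Sum>j\<in>S. ((if k = i \<and> l = j then (1/2) * c $ i $ j else 0)
             - (if l = i \<and> k = j then (1/2) * c $ i $ j else 0)))"
      by (simp only: brk_term[OF True])
    also have "\<dots> = (\<Sum>i\<in>S. \<Sum>j\<in>S. (if k = i \<and> l = j then (1/2) * c $ i $ j else 0))
             - (\<Sum>i\<in>S. \<Sum>j\<in>S. (if l = i \<and> k = j then (1/2) * c $ i $ j else 0))"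
      by (simp only: sum_subtractf)
    also have "\<dots> = (1/2) * c $ k $ l - (1/2) * c $ l $ k"
      using kl fin by (simp only: sum_delta2)
    also have "\<dots> = c $ k $ l"
    proof -
      have "c $ l $ k = - (c $ k $ l)" using c unfolding cent_def by blast
      then show ?thesis by simp
    qed
    finally show ?thesis .
  next
    case False
    have "c $ k $ l = 0" using c False unfolding cent_def by blast
    have z: "N_bracket E (a *\<^sub>R ax i) (ax j) $ k $ l = 0" for a i j using False by (simp add: N_bracket_nth)
    show ?thesis unfolding sum_component z using \<open>c $ k $ l = 0\<close> by simp
  qed
  note X = this
  show ?thesis
    by (rule vec_eq_iff[THEN iffD2], intro allI, rule vec_eq_iff[THEN iffD2], intro allI, rule X[symmetric])
qed


lemma VS_add: "a \<in> VS S \<Longrightarrow> b \<in> VS S \<Longrightarrow> a + b \<in> VS S"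
  and VS_scale: "a \<in> VS S \<Longrightarrow> r *\<^sub>R a \<in> VS S"
  and VS_0: "0 \<in> VS S"
  by (auto simp: VS_def)

lemma mult_closed:
  assumes "x \<in> N_carrier S E" "y \<in> N_carrier S E"
  shows "N_mult E x y \<in> N_carrier S E"
proof -
  obtain v c w d where x: "x = (v,c)" and y: "y = (w,d)" by (cases x, cases y)
  have "v \<in> VS S" "cent E c" "w \<in> VS S" "cent E d" using assms by (auto simp: x y carrier_iff)
  moreover have "cent E ((1/2) *\<^sub>R N_bracket E v w)"
    using cent_brk[of E "(1/2) *\<^sub>R v" w] by (simp add: brk_scale)
  ultimately show ?thesis by (simp add: x y mult_eq carrier_iff VS_add cent_add)
qed

lemma grp_data:
  fixes \<phi> :: "'a::finite Nelem \<Rightarrow> 'b::finite Nelem" and F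
  assumes sg: "simple_graph S E"
    and mapC: "\<And>x. x \<in> N_carrier S E \<Longrightarrow> \<phi> x \<in> N_carrier S' E'"
    and hom: "\<And>x y. x \<in> N_carrier S E \<Longrightarrow> y \<in> N_carrier S E \<Longrightarrow> \<phi> (N_mult E x y) = N_mult E' (\<phi> x) (\<phi> y)"
    and cont: "continuous_on UNIV F" and FC: "\<And>x. x \<in> N_carrier S E \<Longrightarrow> F x = \<phi> x"
  shows "\<exists>T. linear T \<and> (\<forall>v c. (v,c) \<in> N_carrier S E \<longrightarrow> fst (\<phi> (v,c)) = T v) \<and> (\<forall>x\<in>VS S. T x \<in> VS S') \<and>
          (\<forall>x\<in>VS S. \<forall>y\<in>VS S. N_bracket E' (T x) (T y) = snd (\<phi> (0, N_bracket E x y)))"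
proof -
  define C where "C = N_carrier S E"
  have inC: "v \<in> VS S \<Longrightarrow> cent E c \<Longrightarrow> (v,c) \<in> C" for v c by (simp add: C_def carrier_iff)
  define p where "p x = fst (\<phi> x)" for x
  have comm: "fst (\<phi> (0, N_bracket E a b)) = 0 \<and> snd (\<phi> (0, N_bracket E a b)) = N_bracket E' (p (a,0)) (p (b,0))"
    if a: "a \<in> VS S" and b: "b \<in> VS S" for a b
  proof -
    have g: "(a,0) \<in> C" and h: "(b,0) \<in> C" and z: "(0, N_bracket E a b) \<in> C"
      using a b by (auto intro!: inC simp: cent_0 cent_brk VS_0)
    have hg: "N_mult E (b,0) (a,0) \<in> C" using mult_closed g h by (simp add: C_def)
    have e: "N_mult E (a,0) (b,0) = N_mult E (N_mult E (b,0) (a,0)) (0, N_bracket E a b)"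
      by (simp add: mult_eq brk_swap[of E b a] algebra_simps)
    have "\<phi> (N_mult E (a,0) (b,0)) = N_mult E' (\<phi> (a,0)) (\<phi> (b,0))" using hom g h by (simp add: C_def)
    moreover have "\<phi> (N_mult E (N_mult E (b,0) (a,0)) (0, N_bracket E a b))
        = N_mult E' (N_mult E' (\<phi> (b,0)) (\<phi> (a,0))) (\<phi> (0, N_bracket E a b))"
      using hom hg z g h by (simp add: C_def)
    ultimately have eq: "N_mult E' (\<phi> (a,0)) (\<phi> (b,0)) = N_mult E' (N_mult E' (\<phi> (b,0)) (\<phi> (a,0))) (\<phi> (0, N_bracket E a b))"
      using e by simp
    obtain A c1 where A: "\<phi> (a,0) = (A, c1)" by (cases "\<phi> (a,0)")
    obtain B d1 where B: "\<phi> (b,0) = (B, d1)" by (cases "\<phi> (b,0)")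
    obtain u r where U: "\<phi> (0, N_bracket E a b) = (u, r)" by (cases "\<phi> (0, N_bracket E a b)")
    have eq2: "(A + B, c1 + d1 + (1/2) *\<^sub>R N_bracket E' A B)
        = (B + A + u, d1 + c1 + (1/2) *\<^sub>R N_bracket E' B A + r + (1/2) *\<^sub>R N_bracket E' (B + A) u)"
      using eq by (simp add: A B U mult_eq)
    then have u0: "u = 0" by simp
    with eq2 have "c1 + d1 + (1/2) *\<^sub>R N_bracket E' A B = d1 + c1 + (1/2) *\<^sub>R N_bracket E' B A + r" by simp
    then have "r = N_bracket E' A B" by (simp add: brk_swap[of E' B A] algebra_simps)
    then show ?thesis using u0 by (simp add: U A B p_def)
  qed
  have padd: "p (a + b, 0) = p (a,0) + p (b,0)" if a: "a \<in> VS S" and b: "b \<in> VS S" for a b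
  proof -
    have ha: "(a,0) \<in> C" and hb: "(b,0) \<in> C" and hab: "(a + b, 0) \<in> C"
      and hz: "(0, N_bracket E ((1/2) *\<^sub>R a) b) \<in> C"
      using a b by (auto intro!: inC simp: cent_0 cent_brk VS_0 VS_add)
    have e: "N_mult E (a,0) (b,0) = N_mult E (a + b, 0) (0, N_bracket E ((1/2) *\<^sub>R a) b)"
      by (simp add: mult_eq brk_scale)
    have "p (N_mult E (a,0) (b,0)) = p (a,0) + p (b,0)"
      using hom[of "(a,0)" "(b,0)"] ha hb by (simp add: C_def p_def N_mult_def)
    moreover have "p (N_mult E (a + b, 0) (0, N_bracket E ((1/2) *\<^sub>R a) b)) = p (a + b, 0) + p (0, N_bracket E ((1/2) *\<^sub>R a) b)"
    proof -
      have "\<phi> (N_mult E (a + b, 0) (0, N_bracket E ((1/2) *\<^sub>R a) b)) = N_mult E' (\<phi> (a + b, 0)) (\<phi> (0, N_bracket E ((1/2) *\<^sub>R a) b))"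
        by (rule hom[OF hab[unfolded C_def] hz[unfolded C_def]])
      then show ?thesis by (simp add: p_def N_mult_def)
    qed
    moreover have "p (0, N_bracket E ((1/2) *\<^sub>R a) b) = 0"
      using comm[OF VS_scale[OF a] b] by (simp add: p_def)
    ultimately show ?thesis using e by simp
  qed
  have p0add: "p (0, c + d) = p (0, c) + p (0, d)" if "cent E c" "cent E d" for c d
  proof -
    have "(0, c) \<in> C" "(0, d) \<in> C" using that by (auto intro!: inC simp: VS_0)
    then have "\<phi> (N_mult E (0,c) (0,d)) = N_mult E' (\<phi> (0,c)) (\<phi> (0,d))" using hom by (simp add: C_def)
    then show ?thesis by (simp add: p_def mult_eq N_mult_def)
  qed
  have p00: "p (0, 0) = 0" using p0add[OF cent_0 cent_0] by simp
  have p0sum: "cent E (sum g A) \<and> p (0, sum g A) = (\<Sum>k\<in>A. p (0, g k))"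
    if "finite A" "\<forall>k\<in>A. cent E (g k)" for A and g :: "'c \<Rightarrow> real^'a^'a"
    using that
  proof (induction A rule: finite_induct)
    case empty then show ?case by (simp add: cent_0 p00)
  next
    case (insert x F)
    then have cx: "cent E (g x)" and IH: "cent E (sum g F) \<and> p (0, sum g F) = (\<Sum>k\<in>F. p (0, g k))" by auto
    then show ?case using insert.hyps p0add[OF cx] by (simp add: cent_add)
  qed
  have pcent: "p (0, c) = 0" if c: "cent E c" for c
  proof -
    define g where "g i j = N_bracket E (((1/2) * c $ i $ j) *\<^sub>R ax i) (ax j)" for i j
    have fin: "finite S" using sg by (simp add: simple_graph_def)
    have axS: "i \<in> S \<Longrightarrow> ax i \<in> VS S" for i by (auto simp: VS_def ax_nth)
    have "c = (\<Sum>i\<in>S. \<Sum>j\<in>S. g i j)" unfolding g_def by (rule cent_decomp[OF sg c])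
    then have "p (0, c) = p (0, \<Sum>i\<in>S. \<Sum>j\<in>S. g i j)" by simp
    also have "\<dots> = (\<Sum>i\<in>S. p (0, \<Sum>j\<in>S. g i j))"
      using p0sum[OF fin, of "\<lambda>i. \<Sum>j\<in>S. g i j"] p0sum[OF fin] by (simp add: g_def cent_brk)
    also have "\<dots> = (\<Sum>i\<in>S. \<Sum>j\<in>S. p (0, g i j))"
      using p0sum[OF fin] by (simp add: g_def cent_brk)
    also have "\<dots> = 0"
      using comm[OF VS_scale[OF axS] axS] by (simp add: g_def p_def)
    finally show ?thesis .
  qed
  have pvc: "p (v, c) = p (v, 0)" if "(v, c) \<in> C" for v c
  proof -
    have v: "v \<in> VS S" and c: "cent E c" using that by (auto simp: C_def carrier_iff)
    have "(v, c) = N_mult E (v, 0) (0, c)" by (simp add: mult_eq)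
    then have "\<phi> (v, c) = N_mult E' (\<phi> (v, 0)) (\<phi> (0, c))"
      using hom[of "(v,0)" "(0,c)"] v c by (auto simp: C_def carrier_iff cent_0 VS_0)
    then have "p (v, c) = p (v, 0) + p (0, c)" by (simp add: p_def N_mult_def)
    then show ?thesis using pcent[OF c] by simp
  qed
  define rS :: "real^'a \<Rightarrow> real^'a" where "rS v = (\<chi> i. if i \<in> S then v $ i else 0)" for v
  have rSV: "rS v \<in> VS S" for v by (simp add: rS_def VS_def)
  have rSid: "v \<in> VS S \<Longrightarrow> rS v = v" for v by (auto simp: rS_def VS_def vec_eq_iff)
  have linrS: "linear rS" by (rule linearI) (auto simp: rS_def vec_eq_iff)
  define T where "T v = fst (F (rS v, 0))" for v
  have Tp: "T v = p (v, 0)" if "v \<in> VS S" for v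
    using that FC[of "(v,0)"] by (simp add: T_def rSid p_def carrier_iff cent_0)
  have linT: "linear T"
  proof (rule additive_cont_linear)
    fix a b
    have Tall: "T v = p (rS v, 0)" for v
      using FC[of "(rS v, 0)"] rSV[of v] by (simp add: T_def p_def carrier_iff cent_0)
    have "rS (a + b) = rS a + rS b" using linear_add[OF linrS] .
    then show "T (a + b) = T a + T b"
      using padd[OF rSV rSV, of a b] by (simp add: Tall)
  next
    have "continuous_on UNIV rS" using linrS by (simp add: linear_continuous_on linear_conv_bounded_linear)
    then have "continuous_on UNIV (\<lambda>v. (rS v, 0::real^'a^'a))" by (intro continuous_intros)
    then have "continuous_on UNIV (\<lambda>v. F (rS v, 0))" by (rule continuous_on_compose2[OF cont]) auto
    then show "continuous_on UNIV T" unfolding T_def by (intro continuous_intros)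
  qed
  show ?thesis
  proof (intro exI conjI allI impI ballI)
    show "linear T" by (rule linT)
  next
    fix v c assume "(v, c) \<in> N_carrier S E"
    then show "fst (\<phi> (v, c)) = T v" using pvc[of v c] Tp by (auto simp: C_def carrier_iff p_def)
  next
    fix x assume x: "x \<in> VS S"
    then have "\<phi> (x, 0) \<in> N_carrier S' E'" using mapC by (simp add: carrier_iff cent_0)
    then show "T x \<in> VS S'" using Tp[OF x] by (cases "\<phi> (x,0)") (simp add: carrier_iff p_def)
  next
    fix x y assume x: "x \<in> VS S" and y: "y \<in> VS S"
    show "N_bracket E' (T x) (T y) = snd (\<phi> (0, N_bracket E x y))"
      using comm[OF x y] Tp[OF x] Tp[OF y] by simp
  qed
qed


lemma mk_half:
  fixes \<phi> :: "'a::finite Nelem \<Rightarrow> 'b::finite Nelem" and \<psi> :: "'b Nelem \<Rightarrow> 'a Nelem"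
  assumes sg: "simple_graph S E" and sg': "simple_graph S' E'" and lin: "linear T"
    and Tp: "\<forall>v c. (v,c) \<in> N_carrier S E \<longrightarrow> fst (\<phi> (v,c)) = T v"
    and Tm: "\<forall>x\<in>VS S. T x \<in> VS S'"
    and Tb: "\<forall>x\<in>VS S. \<forall>y\<in>VS S. N_bracket E' (T x) (T y) = snd (\<phi> (0, N_bracket E x y))"
    and T'p: "\<forall>w d. (w,d) \<in> N_carrier S' E' \<longrightarrow> fst (\<psi> (w,d)) = T' w"
    and \<psi>m: "\<And>y. y \<in> N_carrier S' E' \<Longrightarrow> \<psi> y \<in> N_carrier S E"
    and \<phi>\<psi>: "\<And>y. y \<in> N_carrier S' E' \<Longrightarrow> \<phi> (\<psi> y) = y"
  shows "half S E S' E' T T'"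
proof (rule half.intro)
  show "simple_graph S E" by fact
next
  show "simple_graph S' E'" by fact
next
  show "linear T" by fact
next
  show "\<And>x. x \<in> VS S \<Longrightarrow> T x \<in> VS S'" using Tm by blast
next
  fix z :: "real^'b" assume z: "z \<in> VS S'"
  then have zC: "(z, 0) \<in> N_carrier S' E'" by (simp add: carrier_iff cent_0)
  obtain v c where vc: "\<psi> (z, 0) = (v, c)" by (cases "\<psi> (z, 0)")
  have vcC: "(v, c) \<in> N_carrier S E" using \<psi>m[OF zC] vc by simp
  have "T' z = v" using T'p zC vc by (metis fst_conv)
  moreover have "v \<in> VS S" using vcC by (simp add: carrier_iff)
  moreover have "T v = z" using Tp vcC \<phi>\<psi>[OF zC] vc by (metis fst_conv)
  ultimately show "T' z \<in> VS S \<and> T (T' z) = z" by simp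
next
  fix x y x' y' assume "x \<in> VS S" "y \<in> VS S" "x' \<in> VS S" "y' \<in> VS S" "N_bracket E x y = N_bracket E x' y'"
  then show "N_bracket E' (T x) (T y) = N_bracket E' (T x') (T y')" using Tb by metis
qed

lemma smooth_cont: "smooth F \<Longrightarrow> continuous_on UNIV F"
  unfolding smooth_def by (metis Ck.simps(1))

lemma lie_to_graph:
  fixes S :: "'a::finite set" and S' :: "'b::finite set"
  assumes sg: "simple_graph S E" and sg': "simple_graph S' E'" and iso: "N_lie_isomorphic S E S' E'"
  shows "graph_iso S E S' E'"
proof -
  obtain \<phi> where "N_lie_iso S E S' E' \<phi>" using iso by (auto simp: N_lie_isomorphic_def)
  then have bij: "bij_betw \<phi> (N_carrier S E) (N_carrier S' E')"
    and hom: "\<And>x y. x \<in> N_carrier S E \<Longrightarrow> y \<in> N_carrier S E \<Longrightarrow> \<phi> (N_mult E x y) = N_mult E' (\<phi> x) (\<phi> y)"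
    and Fex: "\<exists>F. smooth F \<and> (\<forall>x\<in>N_carrier S E. F x = \<phi> x)"
    and Gex: "\<exists>G. smooth G \<and> (\<forall>y\<in>N_carrier S' E'. G y \<in> N_carrier S E \<and> \<phi> (G y) = y)"
    unfolding N_lie_iso_def by auto
  obtain F where F: "smooth F" "\<forall>x\<in>N_carrier S E. F x = \<phi> x" using Fex by blast
  obtain G where G: "smooth G" "\<forall>y\<in>N_carrier S' E'. G y \<in> N_carrier S E \<and> \<phi> (G y) = y" using Gex by blast
  have mapC: "\<And>x. x \<in> N_carrier S E \<Longrightarrow> \<phi> x \<in> N_carrier S' E'" using bij by (auto simp: bij_betw_def)
  have inj: "inj_on \<phi> (N_carrier S E)" using bij by (auto simp: bij_betw_def)
  have Gm: "\<And>y. y \<in> N_carrier S' E' \<Longrightarrow> G y \<in> N_carrier S E" using G by blast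
  have \<phi>G: "\<And>y. y \<in> N_carrier S' E' \<Longrightarrow> \<phi> (G y) = y" using G by blast
  have G\<phi>: "G (\<phi> x) = x" if x: "x \<in> N_carrier S E" for x
    using inj_onD[OF inj \<phi>G[OF mapC[OF x]] Gm[OF mapC[OF x]] x] .
  have Ghom: "G (N_mult E' y1 y2) = N_mult E (G y1) (G y2)"
    if y: "y1 \<in> N_carrier S' E'" "y2 \<in> N_carrier S' E'" for y1 y2
  proof (rule inj_onD[OF inj])
    show "\<phi> (G (N_mult E' y1 y2)) = \<phi> (N_mult E (G y1) (G y2))"
      using hom[OF Gm[OF y(1)] Gm[OF y(2)]] \<phi>G y mult_closed[OF y] by simp
    show "G (N_mult E' y1 y2) \<in> N_carrier S E" using Gm mult_closed[OF y] .
    show "N_mult E (G y1) (G y2) \<in> N_carrier S E" using mult_closed Gm y by blast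
  qed
  obtain T where T: "linear T" "\<forall>v c. (v,c) \<in> N_carrier S E \<longrightarrow> fst (\<phi> (v,c)) = T v"
    "\<forall>x\<in>VS S. T x \<in> VS S'" "\<forall>x\<in>VS S. \<forall>y\<in>VS S. N_bracket E' (T x) (T y) = snd (\<phi> (0, N_bracket E x y))"
    using grp_data[OF sg mapC hom smooth_cont[OF F(1)]] F(2) by blast
  obtain T' where T': "linear T'" "\<forall>v c. (v,c) \<in> N_carrier S' E' \<longrightarrow> fst (G (v,c)) = T' v"
    "\<forall>x\<in>VS S'. T' x \<in> VS S" "\<forall>x\<in>VS S'. \<forall>y\<in>VS S'. N_bracket E (T' x) (T' y) = snd (G (0, N_bracket E' x y))"
    using grp_data[OF sg' Gm Ghom smooth_cont[OF G(1)] refl] by blast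
  have h1: "half S E S' E' T T'"
    by (rule mk_half[OF sg sg' T(1) T(2) T(3) T(4) T'(2) Gm \<phi>G])
  have h2: "half S' E' S E T' T"
    by (rule mk_half[OF sg' sg T'(1) T'(2) T'(3) T'(4) T(2) mapC G\<phi>])
  interpret full S E S' E' T T' using h1 h2 by (rule full.intro)
  show ?thesis by (rule full_iso)
qed


definition pmap :: "'b::finite set \<Rightarrow> ('b \<Rightarrow> 'a::finite) \<Rightarrow> 'a Nelem \<Rightarrow> 'b Nelem" where
  "pmap S' g x = ((\<chi> r. if r \<in> S' then fst x $ g r else 0),
                  (\<chi> r s. if r \<in> S' \<and> s \<in> S' then snd x $ g r $ g s else 0))"

lemma linear_pmap: "linear (pmap S' g)"
  by (rule linearI) (auto simp: pmap_def vec_eq_iff prod_eq_iff)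

lemma Ck_const: "Ck k (\<lambda>x. c)"
proof (induction k arbitrary: c)
  case 0 then show ?case by simp
next
  case (Suc k)
  have "\<forall>x. ((\<lambda>x. c) has_derivative (\<lambda>x v. 0) x) (at x)" by simp
  then show ?case using Suc by (auto intro!: exI[of _ "\<lambda>x v. 0"])
qed

lemma smooth_linear:
  fixes h :: "'x::euclidean_space \<Rightarrow> 'y::real_normed_vector"
  assumes "linear h" shows "smooth h"
proof -
  have bl: "bounded_linear h" using assms by (simp add: linear_conv_bounded_linear)
  have "Ck k h" for k
  proof (cases k)
    case 0 then show ?thesis using bl by (simp add: linear_continuous_on)
  next
    case (Suc k')
    have "\<forall>x. (h has_derivative (\<lambda>x. h) x) (at x)" using bl by (simp add: bounded_linear_imp_has_derivative)
    moreover have "\<forall>v. Ck k' (\<lambda>x. (\<lambda>x. h) x v)" by (simp add: Ck_const)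
    ultimately show ?thesis using Suc by auto
  qed
  then show ?thesis by (simp add: smooth_def)
qed

context
  fixes S :: "'a::finite set" and E and S' :: "'b::finite set" and E' and g :: "'b \<Rightarrow> 'a"
  assumes sg: "simple_graph S E" and sg': "simple_graph S' E'"
    and gS: "\<And>r. r \<in> S' \<Longrightarrow> g r \<in> S"
    and ge: "\<And>r s. r \<in> S' \<Longrightarrow> s \<in> S' \<Longrightarrow> {g r, g s} \<in> E \<longleftrightarrow> {r, s} \<in> E'"
begin

lemma pmap_C:
  assumes x: "x \<in> N_carrier S E" shows "pmap S' g x \<in> N_carrier S' E'"
proof -
  obtain v c where xv: "x = (v,c)" by (cases x)
  have c: "cent E c" using x by (simp add: xv carrier_iff)
  have "cent E' (\<chi> r s. if r \<in> S' \<and> s \<in> S' then c $ g r $ g s else 0)"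
    unfolding cent_def
  proof (intro conjI allI impI)
    fix i j
    have "c $ g i $ g j = - (c $ g j $ g i)" using c unfolding cent_def by blast
    then show "(\<chi> r s. if r \<in> S' \<and> s \<in> S' then c $ g r $ g s else 0) $ i $ j
        = - ((\<chi> r s. if r \<in> S' \<and> s \<in> S' then c $ g r $ g s else 0) $ j $ i)" by auto
  next
    fix i j assume ij: "{i, j} \<notin> E'"
    show "(\<chi> r s. if r \<in> S' \<and> s \<in> S' then c $ g r $ g s else 0) $ i $ j = 0"
    proof (cases "i \<in> S' \<and> j \<in> S'")
      case True
      then have "{g i, g j} \<notin> E" using ge ij by blast
      then have "c $ g i $ g j = 0" using c unfolding cent_def by blast
      then show ?thesis by simp
    qed auto
  qed
  moreover have "pmap S' g x = ((\<chi> r. if r \<in> S' then v $ g r else 0), (\<chi> r s. if r \<in> S' \<and> s \<in> S' then c $ g r $ g s else 0))"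
    unfolding xv pmap_def fst_conv snd_conv ..
  ultimately show ?thesis by (simp add: carrier_iff VS_def)
qed

lemma pmap_hom:
  assumes x: "x \<in> N_carrier S E" and y: "y \<in> N_carrier S E"
  shows "pmap S' g (N_mult E x y) = N_mult E' (pmap S' g x) (pmap S' g y)"
proof -
  obtain v c where xv: "x = (v,c)" by (cases x)
  obtain w d where yw: "y = (w,d)" by (cases y)
  have "(if r \<in> S' \<and> s \<in> S' then N_bracket E v w $ g r $ g s else 0)
      = N_bracket E' (\<chi> r. if r \<in> S' then v $ g r else 0) (\<chi> r. if r \<in> S' then w $ g r else 0) $ r $ s" for r s
  proof (cases "r \<in> S' \<and> s \<in> S'")
    case True
    then show ?thesis using ge[of r s] by (simp add: N_bracket_nth)
  next
    case False
    then have "{r, s} \<notin> E'" using simple_graph_edge[OF sg'] by blast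
    then show ?thesis using False by (auto simp: N_bracket_nth)
  qed
  note B = this
  define v' where "v' = (\<chi> r. if r \<in> S' then v $ g r else 0)"
  define w' where "w' = (\<chi> r. if r \<in> S' then w $ g r else 0)"
  have pv: "pmap S' g (a,b) = ((\<chi> r. if r \<in> S' then a $ g r else 0), (\<chi> r s. if r \<in> S' \<and> s \<in> S' then b $ g r $ g s else 0))" for a b
    unfolding pmap_def fst_conv snd_conv ..
  have 1: "(\<chi> r. if r \<in> S' then (v + w) $ g r else 0) = v' + w'"
    by (auto simp: vec_eq_iff v'_def w'_def)
  have 2: "(\<chi> r s. if r \<in> S' \<and> s \<in> S' then (c + d + (1/2) *\<^sub>R N_bracket E v w) $ g r $ g s else 0)
      = (\<chi> r s. if r \<in> S' \<and> s \<in> S' then c $ g r $ g s else 0) + (\<chi> r s. if r \<in> S' \<and> s \<in> S' then d $ g r $ g s else 0)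
        + (1/2) *\<^sub>R N_bracket E' v' w'"
  proof -
    have "(if r \<in> S' \<and> s \<in> S' then (c + d + (1/2) *\<^sub>R N_bracket E v w) $ g r $ g s else 0)
      = (if r \<in> S' \<and> s \<in> S' then c $ g r $ g s else 0) + (if r \<in> S' \<and> s \<in> S' then d $ g r $ g s else 0)
        + (1/2) * N_bracket E' v' w' $ r $ s" for r s
      using B[of r s] unfolding v'_def w'_def by (cases "r \<in> S' \<and> s \<in> S'") auto
    then show ?thesis by (simp add: vec_eq_iff)
  qed
  show ?thesis
    unfolding xv yw mult_eq pv 1 2 by (simp add: v'_def w'_def)
qed

end

lemma pmap_inv:
  assumes sg: "simple_graph S E" and x: "x \<in> N_carrier S E"
    and fS: "\<And>a. a \<in> S \<Longrightarrow> f a \<in> S'" and gf: "\<And>a. a \<in> S \<Longrightarrow> g (f a) = a"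
  shows "pmap S f (pmap S' g x) = x"
proof -
  obtain v c where xv: "x = (v,c)" by (cases x)
  have v: "v \<in> VS S" and c: "cent E c" using x by (auto simp: xv carrier_iff)
  have "c $ a $ b = 0" if "\<not> (a \<in> S \<and> b \<in> S)" for a b
  proof -
    have "{a,b} \<notin> E" using that simple_graph_edge[OF sg] by blast
    then show ?thesis using c unfolding cent_def by blast
  qed
  then show ?thesis using v fS gf by (auto simp: xv pmap_def vec_eq_iff VS_def)
qed

lemma graph_to_lie:
  fixes S :: "'a::finite set" and S' :: "'b::finite set"
  assumes sg: "simple_graph S E" and sg': "simple_graph S' E'" and gi: "graph_iso S E S' E'"
  shows "N_lie_isomorphic S E S' E'"
proof -
  obtain f where bf: "bij_betw f S S'" and fe: "\<forall>a\<in>S. \<forall>b\<in>S. {a, b} \<in> E \<longleftrightarrow> {f a, f b} \<in> E'"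
    using gi by (auto simp: graph_iso_def)
  define g where "g = inv_into S f"
  have bg: "bij_betw g S' S" using bf by (simp add: g_def bij_betw_inv_into)
  have fS: "\<And>a. a \<in> S \<Longrightarrow> f a \<in> S'" using bf by (auto simp: bij_betw_def)
  have gS: "\<And>r. r \<in> S' \<Longrightarrow> g r \<in> S" using bg by (auto simp: bij_betw_def)
  have gf: "\<And>a. a \<in> S \<Longrightarrow> g (f a) = a" using bf by (simp add: g_def bij_betw_inv_into_left)
  have fg: "\<And>r. r \<in> S' \<Longrightarrow> f (g r) = r" using bf by (simp add: g_def bij_betw_inv_into_right)
  have ge: "{g r, g s} \<in> E \<longleftrightarrow> {r, s} \<in> E'" if "r \<in> S'" "s \<in> S'" for r s
    using fe gS fg that by metis
  have fe': "{f a, f b} \<in> E' \<longleftrightarrow> {a, b} \<in> E" if "a \<in> S" "b \<in> S" for a b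
    using fe that by metis
  define \<Phi> where "\<Phi> = pmap S' g"
  define \<Psi> where "\<Psi> = pmap S f"
  have \<Phi>C: "\<And>x. x \<in> N_carrier S E \<Longrightarrow> \<Phi> x \<in> N_carrier S' E'"
    unfolding \<Phi>_def by (rule pmap_C[OF sg sg' gS ge])
  have \<Psi>C: "\<And>y. y \<in> N_carrier S' E' \<Longrightarrow> \<Psi> y \<in> N_carrier S E"
    unfolding \<Psi>_def by (rule pmap_C[OF sg' sg fS fe'])
  have \<Psi>\<Phi>: "\<And>x. x \<in> N_carrier S E \<Longrightarrow> \<Psi> (\<Phi> x) = x"
    unfolding \<Phi>_def \<Psi>_def by (rule pmap_inv[OF sg _ fS gf])
  have \<Phi>\<Psi>: "\<And>y. y \<in> N_carrier S' E' \<Longrightarrow> \<Phi> (\<Psi> y) = y"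
    unfolding \<Phi>_def \<Psi>_def by (rule pmap_inv[OF sg' _ gS fg])
  have "N_lie_iso S E S' E' \<Phi>"
    unfolding N_lie_iso_def
  proof (intro conjI ballI)
    show "bij_betw \<Phi> (N_carrier S E) (N_carrier S' E')"
      by (rule bij_betw_byWitness[where f'=\<Psi>]) (use \<Phi>C \<Psi>C \<Psi>\<Phi> \<Phi>\<Psi> in auto)
    show "\<Phi> (N_mult E x y) = N_mult E' (\<Phi> x) (\<Phi> y)" if "x \<in> N_carrier S E" "y \<in> N_carrier S E" for x y
      unfolding \<Phi>_def by (rule pmap_hom[OF sg sg' gS ge that])
    show "\<exists>F. smooth F \<and> (\<forall>x\<in>N_carrier S E. F x = \<Phi> x)"
      by (intro exI[of _ \<Phi>] conjI) (auto simp: \<Phi>_def intro: smooth_linear linear_pmap)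
    show "\<exists>G. smooth G \<and> (\<forall>y\<in>N_carrier S' E'. G y \<in> N_carrier S E \<and> \<Phi> (G y) = y)"
      by (intro exI[of _ \<Psi>] conjI) (auto simp: \<Psi>_def intro: smooth_linear linear_pmap \<Psi>C[unfolded \<Psi>_def] \<Phi>\<Psi>[unfolded \<Psi>_def])
  qed
  then show ?thesis by (auto simp: N_lie_isomorphic_def)
qed


theorem mainTheorem4:
  fixes S :: "'a::finite set" and E :: "'a set set"
    and S' :: "'b::finite set" and E' :: "'b set set"
  assumes "simple_graph S E" and "simple_graph S' E'"
  shows "N_lie_isomorphic S E S' E' \<longleftrightarrow> graph_iso S E S' E'"
  using lie_to_graph[OF assms] graph_to_lie[OF assms] by blast

end
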